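(* For every integer $n\ge 2$, the $n$-abomination $\mathbb{X}_n$ has width $2^{n+2}$; that is, $\mathbb{X}_n$ contains an antichain with $2^{n+2}$ elements and every antichain in $\mathbb{X}_n$ has at most $2^{n+2}$ elements.
   Context: $\mathbb{N}=\{0,1,2,\dots\}$. Fix an integer $n\ge 2$ and put $N=2^{n+1}-1$. Let $T_n$ be the set of triples $\langle k_1,k_2,k_3\rangle$ of pairwise distinct natural numbers $\le N$, with a fixed enumeration $T_n=\{s_0,\dots,s_t\}$. Let $U_n$ be a set of pairwise distinct elements $a_m,b_m$ ($m\in\mathbb{N}$) and $c_{m,k},d_{m,k},e^a_{m,k},e^b_{m,k}$ ($m\in\mathbb{N}$, $0\le k\le N$). Define $x\prec y$ on $U_n$ iff one of: (1) $x=a_m$ and $y\in\{c_{m,k_1},c_{m,k_2}\}$, where $s_j=\langle k_1,k_2,k_3\rangle$ with $j\equiv m \bmod (t+1)$; (2) $x=b_m$ and $y\in\{c_{m,k_1},c_{m,k_3}\}$, with $s_j$ as in (1); (3) $m\ge1$, $x=c_{m,k}$, and either $y=e^a_{m-1,j}$ with $j\ne k$, or $y=e^b_{m-1,i}$ for any $i\le N$; (4) $x=d_{m,k}$ and $y=c_{m,j}$ with $j\neq k$; (5) $x=e^a_{m,k}$ and either $y=a_m$ or $y=d_{m,j}$ with $j\ne k$; (6) $x=e^b_{m,k}$ and either $y=b_m$ or $y=d_{m,j}$ with $j\ne k$. Let $\le$ be the reflexive transitive closure of $\prec$. The $n$-abomination $\mathbb{X}_n$ is the poset $U_n\cup\{\bot\}$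 where $\bot$ is a new least element, with the topology in which $U$ is open iff $\bot\notin U$ or $U$ is cofinite. A rooted poset has width $w$ if its largest antichain has exactly $w$ elements. *)

theory Defs
  imports Main
begin

datatype elt = EltA nat | EltB nat | EltC nat nat | EltD nat nat
  | EltEa nat nat | EltEb nat nat | Bot

definition bigN :: "nat \<Rightarrow> nat" where
  "bigN n = 2 ^ (n + 1) - 1"

definition triples :: "nat \<Rightarrow> (nat \<times> nat \<times> nat) set" where
  "triples n = {(k1, k2, k3). k1 \<le> bigN n \<and> k2 \<le> bigN n \<and> k3 \<le> bigN n
      \<and> k1 \<noteq> k2 \<and> k1 \<noteq> k3 \<and> k2 \<noteq> k3}"

definition is_enum :: "nat \<Rightarrow> (nat \<Rightarrow> nat \<times> nat \<times> nat) \<Rightarrow> bool" where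
  "is_enum n s \<longleftrightarrow> bij_betw s {..<card (triples n)} (triples n)"

definition carrier :: "nat \<Rightarrow> elt set" where
  "carrier n = {Bot} \<union> range EltA \<union> range EltB
     \<union> {EltC m k | m k. k \<le> bigN n} \<union> {EltD m k | m k. k \<le> bigN n}
     \<union> {EltEa m k | m k. k \<le> bigN n} \<union> {EltEb m k | m k. k \<le> bigN n}"

definition prec :: "nat \<Rightarrow> (nat \<Rightarrow> nat \<times> nat \<times> nat) \<Rightarrow> elt \<Rightarrow> elt \<Rightarrow> bool" where
  "prec n s x y \<longleftrightarrow> x \<in> carrier n \<and> y \<in> carrier n \<and> x \<noteq> Bot \<and> y \<noteq> Bot \<and>
    ((\<exists>m k1 k2 k3. x = EltA m \<and> s (m mod card (triples n)) = (k1, k2, k3)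
        \<and> (y = EltC m k1 \<or> y = EltC m k2))
   \<or> (\<exists>m k1 k2 k3. x = EltB m \<and> s (m mod card (triples n)) = (k1, k2, k3)
        \<and> (y = EltC m k1 \<or> y = EltC m k3))
   \<or> (\<exists>m k. m \<ge> 1 \<and> x = EltC m k \<and>
        ((\<exists>j. j \<noteq> k \<and> y = EltEa (m - 1) j) \<or> (\<exists>i. y = EltEb (m - 1) i)))
   \<or> (\<exists>m k j. x = EltD m k \<and> j \<noteq> k \<and> y = EltC m j)
   \<or> (\<exists>m k. x = EltEa m k \<and> (y = EltA m \<or> (\<exists>j. j \<noteq> k \<and> y = EltD m j)))
   \<or> (\<exists>m k. x = EltEb m k \<and> (y = EltB m \<or> (\<exists>j. j \<noteq> k \<and> y = EltD m j))))"

definition leq :: "nat \<Rightarrow> (nat \<Rightarrow> nat \<times> nat \<times> nat) \<Rightarrow> elt \<Rightarrow> elt \<Rightarrow> bool" where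
  "leq n s x y \<longleftrightarrow> x \<in> carrier n \<and> y \<in> carrier n \<and>
     (x = Bot \<or> (prec n s)\<^sup>*\<^sup>* x y)"

definition antichain :: "nat \<Rightarrow> (nat \<Rightarrow> nat \<times> nat \<times> nat) \<Rightarrow> elt set \<Rightarrow> bool" where
  "antichain n s A \<longleftrightarrow> A \<subseteq> carrier n \<and>
     (\<forall>x\<in>A. \<forall>y\<in>A. x \<noteq> y \<longrightarrow> \<not> leq n s x y)"

definition has_width :: "nat \<Rightarrow> (nat \<Rightarrow> nat \<times> nat \<times> nat) \<Rightarrow> nat \<Rightarrow> bool" where
  "has_width n s w \<longleftrightarrow>
     (\<exists>A. antichain n s A \<and> finite A \<and> card A = w) \<and>
     (\<forall>A. antichain n s A \<longrightarrow> finite A \<and> card A \<le> w)"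

end

theory Submission
  imports Defs
begin

abbreviation R :: "nat \<Rightarrow> (nat \<Rightarrow> nat \<times> nat \<times> nat) \<Rightarrow> elt \<Rightarrow> elt \<Rightarrow> bool" where
  "R n s \<equiv> (prec n s)\<^sup>*\<^sup>*"

lemma p_ea_a: "k \<le> bigN n \<Longrightarrow> prec n s (EltEa m k) (EltA m)"
  by (simp add: prec_def carrier_def)
lemma p_eb_b: "k \<le> bigN n \<Longrightarrow> prec n s (EltEb m k) (EltB m)"
  by (simp add: prec_def carrier_def)
lemma p_ea_d: "k \<le> bigN n \<Longrightarrow> j \<le> bigN n \<Longrightarrow> j \<noteq> k \<Longrightarrow> prec n s (EltEa m k) (EltD m j)"
  by (simp add: prec_def carrier_def)
lemma p_eb_d: "k \<le> bigN n \<Longrightarrow> j \<le> bigN n \<Longrightarrow> j \<noteq> k \<Longrightarrow> prec n s (EltEb m k) (EltD m j)"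
  by (simp add: prec_def carrier_def)
lemma p_d_c: "k \<le> bigN n \<Longrightarrow> j \<le> bigN n \<Longrightarrow> j \<noteq> k \<Longrightarrow> prec n s (EltD m k) (EltC m j)"
  by (simp add: prec_def carrier_def)
lemma p_c_ea: "k \<le> bigN n \<Longrightarrow> j \<le> bigN n \<Longrightarrow> j \<noteq> k \<Longrightarrow> prec n s (EltC (Suc m) k) (EltEa m j)"
  by (simp add: prec_def carrier_def)
lemma p_c_eb: "k \<le> bigN n \<Longrightarrow> j \<le> bigN n \<Longrightarrow> prec n s (EltC (Suc m) k) (EltEb m j)"
  by (simp add: prec_def carrier_def)
lemma p_a_c:
  assumes "s (m mod card (triples n)) = (a1, a2, a3)" "(a1, a2, a3) \<in> triples n"
  shows "prec n s (EltA m) (EltC m a1)" "prec n s (EltA m) (EltC m a2)"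
  using assms by (auto simp add: prec_def carrier_def triples_def)
lemma p_b_c:
  assumes "s (m mod card (triples n)) = (a1, a2, a3)" "(a1, a2, a3) \<in> triples n"
  shows "prec n s (EltB m) (EltC m a1)" "prec n s (EltB m) (EltC m a3)"
  using assms by (auto simp add: prec_def carrier_def triples_def)

fun rank :: "elt \<Rightarrow> nat" where
  "rank (EltEa m k) = 4*m+3"
| "rank (EltEb m k) = 4*m+3"
| "rank (EltA m) = 4*m+2"
| "rank (EltB m) = 4*m+2"
| "rank (EltD m k) = 4*m+2"
| "rank (EltC m k) = 4*m+1"
| "rank Bot = 0"

fun lev :: "elt \<Rightarrow> nat" where
  "lev (EltEa m k) = m"
| "lev (EltEb m k) = m"
| "lev (EltA m) = m"
| "lev (EltB m) = m"
| "lev (EltD m k) = m"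
| "lev (EltC m k) = m"
| "lev Bot = 0"

lemma prec_rank: "prec n s x y \<Longrightarrow> rank y < rank x"
  unfolding prec_def by auto

lemma tr_rank: "(prec n s)\<^sup>+\<^sup>+ x y \<Longrightarrow> rank y < rank x"
  by (induction rule: tranclp_induct) (auto dest: prec_rank)

lemma R_rank: "R n s x y \<Longrightarrow> x = y \<or> rank y < rank x"
  by (auto dest: rtranclpD tr_rank)


definition good :: "nat \<Rightarrow> (nat \<Rightarrow> nat \<times> nat \<times> nat) \<Rightarrow> bool" where
  "good n s \<longleftrightarrow> 2 \<le> bigN n \<and> (\<forall>m. s (m mod card (triples n)) \<in> triples n)"

definition other :: "nat \<Rightarrow> nat" where "other j = (if j = 0 then 1 else 0)"
definition pick3 :: "nat \<Rightarrow> nat \<Rightarrow> nat" where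
  "pick3 a b = (if a \<noteq> 0 \<and> b \<noteq> 0 then 0 else if a \<noteq> 1 \<and> b \<noteq> 1 then 1 else 2)"

lemma other_props: "good n s \<Longrightarrow> other j \<le> bigN n \<and> other j \<noteq> j"
  by (auto simp: other_def good_def)
lemma pick3_props: "good n s \<Longrightarrow> pick3 a b \<le> bigN n \<and> pick3 a b \<noteq> a \<and> pick3 a b \<noteq> b"
  by (auto simp: pick3_def good_def)

lemma A_reach:
  assumes g: "good n s" and k: "k \<le> bigN n"
  shows "\<exists>i\<le>bigN n. i \<noteq> k \<and> R n s (EltA M) (EltC M i)"
proof -
  obtain k1 k2 k3 where e: "s (M mod card (triples n)) = (k1, k2, k3)" by (metis prod_cases3)
  have t: "(k1, k2, k3) \<in> triples n" using g e unfolding good_def by metis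
  then have "k1 \<le> bigN n" "k2 \<le> bigN n" "k1 \<noteq> k2" by (auto simp: triples_def)
  then show ?thesis using p_a_c[of s M n k1 k2 k3, OF e t]
    by (metis r_into_rtranclp)
qed

lemma B_reach:
  assumes g: "good n s" and k: "k \<le> bigN n"
  shows "\<exists>i\<le>bigN n. i \<noteq> k \<and> R n s (EltB M) (EltC M i)"
proof -
  obtain k1 k2 k3 where e: "s (M mod card (triples n)) = (k1, k2, k3)" by (metis prod_cases3)
  have t: "(k1, k2, k3) \<in> triples n" using g e unfolding good_def by metis
  then have "k1 \<le> bigN n" "k3 \<le> bigN n" "k1 \<noteq> k3" by (auto simp: triples_def)
  then show ?thesis using p_b_c[of s M n k1 k2 k3, OF e t]
    by (metis r_into_rtranclp)
qed

lemma nonc_reach: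
  assumes g: "good n s" and k: "k \<le> bigN n" and x: "x \<in> carrier n" "x \<noteq> Bot"
    and nc: "\<forall>j. x \<noteq> EltC (lev x) j"
  shows "\<exists>i\<le>bigN n. i \<noteq> k \<and> R n s x (EltC (lev x) i)"
proof (cases x)
  case (EltA M) then show ?thesis using A_reach[OF g k] by simp
next
  case (EltB M) then show ?thesis using B_reach[OF g k] by simp
next
  case (EltC M j) then show ?thesis using nc by simp
next
  case (EltD M j)
  have j: "j \<le> bigN n" using x EltD by (auto simp: carrier_def)
  let ?i = "pick3 k j"
  have "prec n s (EltD M j) (EltC M ?i)" using p_d_c j pick3_props[OF g] by metis
  then show ?thesis using EltD pick3_props[OF g, of k j] by (auto intro: r_into_rtranclp)
next
  case (EltEa M j)
  have j: "j \<le> bigN n" using x EltEa by (auto simp: carrier_def)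
  obtain i where "i \<le> bigN n" "i \<noteq> k" "R n s (EltA M) (EltC M i)" using A_reach[OF g k] by blast
  moreover have "prec n s (EltEa M j) (EltA M)" using p_ea_a j by metis
  ultimately show ?thesis using EltEa by (auto intro: converse_rtranclp_into_rtranclp)
next
  case (EltEb M j)
  have j: "j \<le> bigN n" using x EltEb by (auto simp: carrier_def)
  obtain i where "i \<le> bigN n" "i \<noteq> k" "R n s (EltB M) (EltC M i)" using B_reach[OF g k] by blast
  moreover have "prec n s (EltEb M j) (EltB M)" using p_eb_b j by metis
  ultimately show ?thesis using EltEb by (auto intro: converse_rtranclp_into_rtranclp)
next
  case Bot then show ?thesis using x by simp
qed

lemma c_reach:
  assumes g: "good n s" and k: "k \<le> bigN n" and y: "y \<in> carrier n" "y \<noteq> Bot"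
    and ne: "y \<noteq> EltEa (lev y) k"
  shows "R n s (EltC (Suc (lev y)) k) y"
proof (cases y)
  case (EltA m)
  let ?j = "other k"
  have "prec n s (EltC (Suc m) k) (EltEa m ?j)" using p_c_ea k other_props[OF g] by metis
  moreover have "prec n s (EltEa m ?j) (EltA m)" using p_ea_a other_props[OF g] by metis
  ultimately show ?thesis using EltA by auto
next
  case (EltB m)
  have "prec n s (EltC (Suc m) k) (EltEb m 0)" using p_c_eb k by (metis zero_le)
  moreover have "prec n s (EltEb m 0) (EltB m)" using p_eb_b by (metis zero_le)
  ultimately show ?thesis using EltB by auto
next
  case (EltC m i)
  have i: "i \<le> bigN n" using y EltC by (auto simp: carrier_def)
  let ?j = "other i"
  have "prec n s (EltC (Suc m) k) (EltEb m i)" using p_c_eb k i by metis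
  moreover have "prec n s (EltEb m i) (EltD m ?j)" using p_eb_d i other_props[OF g] by metis
  moreover have "prec n s (EltD m ?j) (EltC m i)" using p_d_c i other_props[OF g] by metis
  ultimately have "R n s (EltC (Suc m) k) (EltC m i)"
    by (meson converse_rtranclp_into_rtranclp r_into_rtranclp)
  then show ?thesis using EltC by simp
next
  case (EltD m j)
  have j: "j \<le> bigN n" using y EltD by (auto simp: carrier_def)
  let ?i = "other j"
  have "prec n s (EltC (Suc m) k) (EltEb m ?i)" using p_c_eb k other_props[OF g] by metis
  moreover have "prec n s (EltEb m ?i) (EltD m j)" using p_eb_d j other_props[OF g] by metis
  ultimately show ?thesis using EltD by auto
next
  case (EltEa m j)
  have j: "j \<le> bigN n" using y EltEa by (auto simp: carrier_def)
  have "j \<noteq> k" using ne EltEa by simp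
  then show ?thesis using EltEa p_c_ea k j by (auto intro: r_into_rtranclp)
next
  case (EltEb m j)
  have j: "j \<le> bigN n" using y EltEb by (auto simp: carrier_def)
  then show ?thesis using EltEb p_c_eb k j by (auto intro: r_into_rtranclp)
next
  case Bot then show ?thesis using y by simp
qed


lemma carrier_C: "k \<le> bigN n \<Longrightarrow> EltC m k \<in> carrier n"
  by (simp add: carrier_def)
lemma carrier_A: "EltA m \<in> carrier n"
  by (simp add: carrier_def)

lemma F1:
  assumes g: "good n s" and x: "x \<in> carrier n" "x \<noteq> Bot" and y: "y \<in> carrier n" "y \<noteq> Bot"
    and l: "lev x = Suc (lev y)"
    and ex: "\<not> (\<exists>k. x = EltC (lev x) k \<and> y = EltEa (lev y) k)"
  shows "R n s x y"
proof (cases "\<exists>k. x = EltC (lev x) k")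
  case True
  then obtain k where xk: "x = EltC (lev x) k" by blast
  have k: "k \<le> bigN n" using x xk by (auto simp: carrier_def)
  have "y \<noteq> EltEa (lev y) k" using ex xk by blast
  then show ?thesis using c_reach[OF g k y] xk l by simp
next
  case False
  define k0 where "k0 = (case y of EltEa _ j \<Rightarrow> j | _ \<Rightarrow> 0)"
  have k0: "k0 \<le> bigN n" using y unfolding k0_def by (cases y) (auto simp: carrier_def)
  obtain i where i: "i \<le> bigN n" "i \<noteq> k0" "R n s x (EltC (lev x) i)"
    using nonc_reach[OF g k0 x] False by blast
  have "y \<noteq> EltEa (lev y) i" using i(2) unfolding k0_def by (cases y) auto
  then have "R n s (EltC (Suc (lev y)) i) y" using c_reach[OF g i(1) y] by simp
  then show ?thesis using i(3) l by (metis rtranclp_trans)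
qed

lemma F2:
  assumes g: "good n s"
  shows "x \<in> carrier n \<Longrightarrow> x \<noteq> Bot \<Longrightarrow> lev x = Suc (Suc (m + d)) \<Longrightarrow> R n s x (EltA (Suc m))"
proof (induction d arbitrary: m)
  case 0
  then show ?case using F1[OF g, of x "EltA (Suc m)"] carrier_A by auto
next
  case (Suc d)
  have "lev x = Suc (Suc (Suc m + d))" using Suc.prems(3) by simp
  then have "R n s x (EltA (Suc (Suc m)))" using Suc.IH[of "Suc m"] Suc.prems(1,2) by blast
  moreover have "R n s (EltA (Suc (Suc m))) (EltA (Suc m))"
    using F1[OF g, of "EltA (Suc (Suc m))" "EltA (Suc m)"] carrier_A by auto
  ultimately show ?case by (metis rtranclp_trans)
qed

lemma cross:
  assumes g: "good n s" and x: "x \<in> carrier n" "x \<noteq> Bot" and y: "y \<in> carrier n" "y \<noteq> Bot"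
    and l: "lev y < lev x"
  shows "R n s x y \<or> (\<exists>k. x = EltC (lev x) k \<and> y = EltEa (lev y) k \<and> lev x = Suc (lev y))"
proof (cases "lev x = Suc (lev y)")
  case True
  then show ?thesis using F1[OF g x y] by blast
next
  case False
  define d where "d = lev x - lev y - 2"
  have d: "lev x = Suc (Suc (lev y + d))" using l False unfolding d_def by arith
  have "R n s x (EltA (Suc (lev y)))" using F2[OF g x d] .
  moreover have "R n s (EltA (Suc (lev y))) y"
    using F1[OF g carrier_A _ y] by auto
  ultimately show ?thesis by (metis rtranclp_trans)
qed


lemma cins: "finite B \<Longrightarrow> card (insert x B) \<le> Suc (card B)"
  by (simp add: card_insert_if)

lemma cimg: "card (f ` {..(N::nat)}) \<le> Suc N"
  using card_image_le[of "{..N}" f] by simp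

lemma nR_of_antichain:
  assumes "antichain n s A" "x \<in> A" "y \<in> A" "x \<noteq> y"
  shows "\<not> R n s x y"
  using assms unfolding antichain_def leq_def by blast

lemma level_bound:
  assumes g: "good n s" and ac: "antichain n s A" and nb: "Bot \<notin> A"
    and lv: "\<forall>x\<in>A. lev x = m"
  shows "finite A \<and> card A \<le> 2 * Suc (bigN n)"
proof -
  define N where "N = bigN n"
  have N2: "2 \<le> N" using g unfolding good_def N_def by simp
  define C where "C = EltC m ` {..N}"
  define D where "D = EltD m ` {..N}"
  define EA where "EA = EltEa m ` {..N}"
  define EB where "EB = EltEb m ` {..N}"
  have cC: "card C \<le> Suc N" "finite C" unfolding C_def using cimg by auto
  have cD: "card D \<le> Suc N" "finite D" unfolding D_def using cimg by auto
  have cEA: "card EA \<le> Suc N" "finite EA" unfolding EA_def using cimg by auto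
  have cEB: "card EB \<le> Suc N" "finite EB" unfolding EB_def using cimg by auto
  have Ac: "A \<subseteq> carrier n" using ac unfolding antichain_def by simp
  have sub: "A \<subseteq> {EltA m, EltB m} \<union> C \<union> D \<union> EA \<union> EB"
  proof
    fix x assume xA: "x \<in> A"
    then have "x \<in> carrier n" "lev x = m" "x \<noteq> Bot" using Ac lv nb by auto
    then show "x \<in> {EltA m, EltB m} \<union> C \<union> D \<union> EA \<union> EB"
      unfolding C_def D_def EA_def EB_def N_def by (cases x) (auto simp: carrier_def)
  qed
  have finA: "finite A" using sub cC cD cEA cEB by (meson finite.insertI finite.emptyI finite_UnI finite_subset)
  have nr: "\<And>x y. x \<in> A \<Longrightarrow> y \<in> A \<Longrightarrow> x \<noteq> y \<Longrightarrow> \<not> R n s x y"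
    using nR_of_antichain[OF ac] by blast
  have r1: "R n s (EltEa m i) (EltC m j)" if "i \<le> N" "j \<le> N" for i j
  proof -
    have "prec n s (EltEa m i) (EltD m (pick3 i j))" using p_ea_d that pick3_props[OF g] N_def by metis
    moreover have "prec n s (EltD m (pick3 i j)) (EltC m j)" using p_d_c that pick3_props[OF g] N_def by metis
    ultimately show ?thesis by auto
  qed
  have r2: "R n s (EltEb m i) (EltC m j)" if "i \<le> N" "j \<le> N" for i j
  proof -
    have "prec n s (EltEb m i) (EltD m (pick3 i j))" using p_eb_d that pick3_props[OF g] N_def by metis
    moreover have "prec n s (EltD m (pick3 i j)) (EltC m j)" using p_d_c that pick3_props[OF g] N_def by metis
    ultimately show ?thesis by auto
  qed
  have r3: "R n s (EltEa m i) (EltD m j)" if "i \<le> N" "j \<le> N" "i \<noteq> j" for i j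
    using p_ea_d that N_def by (metis r_into_rtranclp)
  have r4: "R n s (EltEb m i) (EltD m j)" if "i \<le> N" "j \<le> N" "i \<noteq> j" for i j
    using p_eb_d that N_def by (metis r_into_rtranclp)
  have r5: "R n s (EltD m i) (EltC m j)" if "i \<le> N" "j \<le> N" "i \<noteq> j" for i j
    using p_d_c that N_def by (metis r_into_rtranclp)
  have r6: "R n s (EltEa m i) (EltA m)" if "i \<le> N" for i
    using p_ea_a that N_def by (metis r_into_rtranclp)
  have r7: "R n s (EltEb m i) (EltB m)" if "i \<le> N" for i
    using p_eb_b that N_def by (metis r_into_rtranclp)
  have iC: "i \<le> N" if "EltC m i \<in> A" for i using that Ac by (auto simp: carrier_def N_def)
  have iD: "i \<le> N" if "EltD m i \<in> A" for i using that Ac by (auto simp: carrier_def N_def)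
  have iEA: "i \<le> N" if "EltEa m i \<in> A" for i using that Ac by (auto simp: carrier_def N_def)
  have iEB: "i \<le> N" if "EltEb m i \<in> A" for i using that Ac by (auto simp: carrier_def N_def)
  have "card A \<le> 2 * Suc N"
  proof (cases "\<exists>i. EltEa m i \<in> A \<or> EltEb m i \<in> A")
    case True
    then obtain i where ei: "EltEa m i \<in> A \<or> EltEb m i \<in> A" by blast
    have noC: "A \<inter> C = {}"
    proof (rule ccontr)
      assume "A \<inter> C \<noteq> {}"
      then obtain j where j: "EltC m j \<in> A" unfolding C_def by blast
      show False using ei
      proof
        assume h: "EltEa m i \<in> A" show False using nr[OF h j] r1[OF iEA[OF h] iC[OF j]] by simp
      next
        assume h: "EltEb m i \<in> A" show False using nr[OF h j] r2[OF iEB[OF h] iC[OF j]] by simp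
      qed
    qed
    show ?thesis
    proof (cases "A \<inter> D = {}")
      case True
      define Xa where "Xa = (if EltA m \<in> A then {EltA m} else EA)"
      define Xb where "Xb = (if EltB m \<in> A then {EltB m} else EB)"
      have "A \<subseteq> Xa \<union> Xb"
      proof
        fix x assume xA: "x \<in> A"
        then have "x \<in> {EltA m, EltB m} \<union> EA \<union> EB" using sub noC True by blast
        moreover have "x \<notin> EA" if "EltA m \<in> A"
        proof
          assume "x \<in> EA" then obtain k where "x = EltEa m k" unfolding EA_def by blast
          then show False using nr[OF xA that] r6 iEA xA by auto
        qed
        moreover have "x \<notin> EB" if "EltB m \<in> A"
        proof
          assume "x \<in> EB" then obtain k where "x = EltEb m k" unfolding EB_def by blast
          then show False using nr[OF xA that] r7 iEB xA by auto
        qed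
        ultimately show "x \<in> Xa \<union> Xb" using xA unfolding Xa_def Xb_def by auto
      qed
      moreover have "card Xa \<le> Suc N" "finite Xa" unfolding Xa_def using cEA by auto
      moreover have "card Xb \<le> Suc N" "finite Xb" unfolding Xb_def using cEB by auto
      ultimately have "card A \<le> card (Xa \<union> Xb)" by (meson card_mono finite_UnI)
      also have "\<dots> \<le> card Xa + card Xb" by (rule card_Un_le)
      finally show ?thesis using \<open>card Xa \<le> Suc N\<close> \<open>card Xb \<le> Suc N\<close> by simp
    next
      case False
      then obtain j where dj: "EltD m j \<in> A" unfolding D_def by blast
      have ij: "i = j"
      proof (rule ccontr)
        assume "i \<noteq> j"
        show False using ei
        proof
          assume h: "EltEa m i \<in> A" show False using nr[OF h dj] r3[OF iEA[OF h] iD[OF dj] \<open>i \<noteq> j\<close>] by simp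
        next
          assume h: "EltEb m i \<in> A" show False using nr[OF h dj] r4[OF iEB[OF h] iD[OF dj] \<open>i \<noteq> j\<close>] by simp
        qed
      qed
      have "A \<subseteq> {EltA m, EltB m, EltD m j, EltEa m j, EltEb m j}"
      proof
        fix x assume xA: "x \<in> A"
        then have "x \<in> {EltA m, EltB m} \<union> D \<union> EA \<union> EB" using sub noC by blast
        moreover have "x \<noteq> EltD m k" if "k \<noteq> j" for k
        proof
          assume xk: "x = EltD m k"
          have "i = k"
          proof (rule ccontr)
            assume "i \<noteq> k"
            show False using ei
            proof
              assume h: "EltEa m i \<in> A" show False using nr[OF h xA] r3[OF iEA[OF h] iD[of k] \<open>i \<noteq> k\<close>] xA xk by simp
            next
              assume h: "EltEb m i \<in> A" show False using nr[OF h xA] r4[OF iEB[OF h] iD[of k] \<open>i \<noteq> k\<close>] xA xk by simp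
            qed
          qed
          then show False using ij that by simp
        qed
        moreover have "x \<noteq> EltEa m k" if "k \<noteq> j" for k
        proof
          assume xk: "x = EltEa m k"
          show False using nr[OF xA dj] r3[OF iEA[of k] iD[OF dj] that] xA xk by simp
        qed
        moreover have "x \<noteq> EltEb m k" if "k \<noteq> j" for k
        proof
          assume xk: "x = EltEb m k"
          show False using nr[OF xA dj] r4[OF iEB[of k] iD[OF dj] that] xA xk by simp
        qed
        ultimately show "x \<in> {EltA m, EltB m, EltD m j, EltEa m j, EltEb m j}"
          unfolding D_def EA_def EB_def by blast
      qed
      then have "card A \<le> card {EltA m, EltB m, EltD m j, EltEa m j, EltEb m j}"
        by (intro card_mono) simp_all
      also have "\<dots> \<le> 5"
        using card_length[of "[EltA m, EltB m, EltD m j, EltEa m j, EltEb m j]"] by simp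
      finally show ?thesis using N2 by simp
    qed
  next
    case False
    then have noE: "A \<inter> EA = {}" "A \<inter> EB = {}" unfolding EA_def EB_def by auto
    show ?thesis
    proof (cases "A \<inter> D = {}")
      case True
      then have "A \<subseteq> insert (EltA m) (insert (EltB m) C)" using sub noE by blast
      then have "card A \<le> card (insert (EltA m) (insert (EltB m) C))" using cC by (simp add: card_mono)
      also have "\<dots> \<le> Suc (Suc (card C))" using cins cC by (meson Suc_le_mono dual_order.trans finite_insert)
      finally show ?thesis using cC N2 by simp
    next
      case False
      then obtain j where dj: "EltD m j \<in> A" unfolding D_def by blast
      have "A \<subseteq> insert (EltA m) (insert (EltB m) (insert (EltC m j) D))"
      proof
        fix x assume xA: "x \<in> A"
        then have "x \<in> {EltA m, EltB m} \<union> C \<union> D" using sub noE by blast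
        moreover have "x \<noteq> EltC m k" if "k \<noteq> j" for k
        proof
          assume xk: "x = EltC m k"
          show False using nr[OF dj xA] r5[OF iD[OF dj] iC[of k] that[symmetric]] xA xk by simp
        qed
        ultimately show "x \<in> insert (EltA m) (insert (EltB m) (insert (EltC m j) D))"
          unfolding C_def by blast
      qed
      then have "card A \<le> card (insert (EltA m) (insert (EltB m) (insert (EltC m j) D)))"
        using cD by (simp add: card_mono)
      also have "\<dots> \<le> Suc (Suc (Suc (card D)))" using cins cD
        by (meson Suc_le_mono dual_order.trans finite_insert)
      finally show ?thesis using cD N2 by simp
    qed
  qed
  then show ?thesis using finA N_def by simp
qed


lemma good_of:
  assumes n: "n \<ge> 2" and e: "is_enum n s"
  shows "good n s"
proof -
  have "(2::nat) ^ 3 \<le> 2 ^ (n + 1)" using n by (intro power_increasing) auto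
  then have N: "7 \<le> bigN n" unfolding bigN_def by simp
  have fin: "finite (triples n)"
    by (rule finite_subset[of _ "{..bigN n} \<times> {..bigN n} \<times> {..bigN n}"]) (auto simp: triples_def)
  have "(0, 1, 2) \<in> triples n" using N by (simp add: triples_def)
  then have "card (triples n) > 0" using fin by (metis card_gt_0_iff empty_iff)
  then have "\<forall>m. s (m mod card (triples n)) \<in> triples n"
    using e unfolding is_enum_def by (metis bij_betwE lessThan_iff mod_less_divisor)
  then show ?thesis using N unfolding good_def by simp
qed

lemma R_leq: "leq n s x y \<Longrightarrow> x \<noteq> Bot \<Longrightarrow> R n s x y"
  unfolding leq_def by simp

theorem mainTheorem5:
  fixes n :: nat and s :: "nat \<Rightarrow> nat \<times> nat \<times> nat"
  assumes "n \<ge> 2" and "is_enum n s"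
  shows "has_width n s (2 ^ (n + 2))"
proof -
  have g: "good n s" using good_of assms by blast
  define N where "N = bigN n"
  have W: "2 * Suc N = 2 ^ (n + 2)" unfolding N_def bigN_def by simp
  have N2: "2 \<le> N" using g unfolding good_def N_def by simp
  define A0 where "A0 = EltEa 0 ` {..N} \<union> EltEb 0 ` {..N}"
  have ac0: "antichain n s A0"
    unfolding antichain_def
  proof (intro conjI ballI impI)
    show "A0 \<subseteq> carrier n" unfolding A0_def N_def carrier_def by auto
    fix x y assume "x \<in> A0" "y \<in> A0" "x \<noteq> y"
    moreover have "x \<noteq> Bot" "rank x = 3" "rank y = 3" using \<open>x \<in> A0\<close> \<open>y \<in> A0\<close> unfolding A0_def by auto
    ultimately show "\<not> leq n s x y" using R_leq R_rank by fastforce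
  qed
  have cA0: "card A0 = 2 ^ (n + 2)"
  proof -
    have "card A0 = card (EltEa 0 ` {..N}) + card (EltEb 0 ` {..N})"
      unfolding A0_def by (rule card_Un_disjoint) auto
    also have "\<dots> = Suc N + Suc N" by (simp add: card_image inj_on_def)
    finally show ?thesis using W by simp
  qed
  have up: "finite A \<and> card A \<le> 2 ^ (n + 2)" if ac: "antichain n s A" for A
  proof -
    have Ac: "A \<subseteq> carrier n" using ac unfolding antichain_def by simp
    have nr: "\<And>x y. x \<in> A \<Longrightarrow> y \<in> A \<Longrightarrow> x \<noteq> y \<Longrightarrow> \<not> R n s x y"
      using nR_of_antichain[OF ac] by blast
    show ?thesis
    proof (cases "Bot \<in> A")
      case True
      have "A \<subseteq> {Bot}"
      proof
        fix x assume xA: "x \<in> A"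
        have "Bot \<in> carrier n" by (simp add: carrier_def)
        then have "leq n s Bot x" using xA Ac unfolding leq_def by auto
        then show "x \<in> {Bot}" using ac True xA unfolding antichain_def by auto
      qed
      then have "finite A" "card A \<le> 1" using card_mono[of "{Bot}" A] finite_subset by auto
      then show ?thesis by (metis le_trans one_le_numeral one_le_power)
    next
      case nb: False
      show ?thesis
      proof (cases "\<exists>x\<in>A. \<exists>y\<in>A. lev y < lev x")
        case True
        then obtain x y where xy: "x \<in> A" "y \<in> A" "lev y < lev x" by blast
        have xc: "x \<in> carrier n" "x \<noteq> Bot" "y \<in> carrier n" "y \<noteq> Bot" using xy Ac nb by auto
        have "x \<noteq> y" using xy by auto
        then obtain k where k: "x = EltC (lev x) k" "y = EltEa (lev y) k" "lev x = Suc (lev y)"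
          using cross[OF g xc xy(3)] nr[OF xy(1,2)] by blast
        have "A \<subseteq> {x, y}"
        proof
          fix z assume zA: "z \<in> A"
          have zc: "z \<in> carrier n" "z \<noteq> Bot" using zA Ac nb by auto
          show "z \<in> {x, y}"
          proof (rule ccontr)
            assume zn: "z \<notin> {x, y}"
            show False
            proof (cases "lev z < lev x")
              case True
              obtain k' where "x = EltC (lev x) k'" "z = EltEa (lev z) k'" "lev x = Suc (lev z)"
                using cross[OF g xc(1,2) zc True] nr[OF xy(1) zA] zn by blast
              then show False using k zn by auto
            next
              case False
              then have "lev y < lev z" using xy(3) by simp
              then obtain k' where "z = EltC (lev z) k'" "y = EltEa (lev y) k'" "lev z = Suc (lev y)"
                using cross[OF g zc xc(3,4)] nr[OF zA xy(2)] zn by blast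
              moreover have "k' = k" using k(2) calculation(2) by (metis elt.inject(5))
              ultimately show False using k zn by auto
            qed
          qed
        qed
        then have "finite A" "card A \<le> card {x, y}" using card_mono[of "{x,y}" A] finite_subset by auto
        moreover have "card {x, y} \<le> 2" by (simp add: card_insert_if)
        moreover have "(2::nat) \<le> 2 ^ (n + 2)" using power_increasing[of 1 "n+2" "2::nat"] by simp
        ultimately show ?thesis by linarith
      next
        case False
        show ?thesis
        proof (cases "A = {}")
          case True then show ?thesis by simp
        next
          case ne: False
          then obtain x0 where "x0 \<in> A" by blast
          then have "\<forall>x\<in>A. lev x = lev x0" using False by (meson linorder_neqE_nat)
          then have "finite A \<and> card A \<le> 2 * Suc (bigN n)" using level_bound[OF g ac nb, of "lev x0"] by blast
          then show ?thesis using W N_def by simp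
        qed
      qed
    qed
  qed
  show ?thesis unfolding has_width_def
    using ac0 cA0 up by (metis A0_def finite_UnI finite_atMost finite_imageI)
qed

end
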